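(* In the setting below, let $\tilde h\in L_2(s)$ and define $h^*(\theta)=\tilde h(t(\theta))$ for $\theta\in\Theta$. Then $h^*\in L_2(\nu)$ and $\tilde\Delta(\tilde h)=\Delta(h^* )$.
   Context: $(\mathcal{X},\mathcal{B})$ and $(\Theta,\mathcal{C})$ are Polish spaces with Borel $\sigma$-algebras; $P(\cdot\mid\theta)$ is a Markov kernel; $\nu$ is a $\sigma$-finite measure on $\Theta$; the marginal $M(B)=\int P(B\mid\theta)\nu(d\theta)$ is $\sigma$-finite; $Q(d\theta\mid x)$ is a Markov kernel with $P(dx\mid\theta)\nu(d\theta)=Q(d\theta\mid x)M(dx)$. The transition $R(C\mid\eta)=\int_{\mathcal{X}}Q(C\mid x)P(dx\mid\eta)$ defines the Dirichlet form $\Delta(h)=\frac12\int\int (h(\theta)-h(\eta))^2R(d\theta\mid\eta)\nu(d\eta)$ for $h\in L_2(\nu)$. Let $t:\Theta\to[0,\infty)$ be measurable and $s(A)=\nu(t^{-1}(A))$ on Borel sets of $[0,\infty)$. Assume there are disjoint Borel sets $A_i$, $i\ge1$, covering $[0,\infty)$ with $0<\nu(t^{-1}(A_i))<\infty$. Let $\pi(d\theta\mid a)$ be a Markov kernel with $\int f_2(t(\theta))f_1(\theta)\nu(d\theta)=\int_0^\infty f_2(a)\int f_1(\theta)\pi(d\theta\mid a)\,s(da)$ for all nonnegative measurable $f_1,f_2$. Set $\tilde P(dx\mid a)=\int P(dx\mid\theta)\pi(d\theta\mid a)$; its marginal under $s$ is $M$, and $\tilde Q(da\mid x)$ is a Markov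 kernel with $\tilde P(dx\mid a)s(da)=\tilde Q(da\mid x)M(dx)$. Let $\tilde R(da\mid b)=\int\tilde Q(da\mid x)\tilde P(dx\mid b)$ and $\tilde\Delta(\tilde h)=\frac12\int_0^\infty\int_0^\infty(\tilde h(a)-\tilde h(b))^2\tilde R(da\mid b)s(db)$. *)

theory Defs
  imports "HOL-Probability.Probability"
begin

definition markov_kernel :: "'a measure \<Rightarrow> 'b measure \<Rightarrow> ('a \<Rightarrow> 'b measure) \<Rightarrow> bool" where
  "markov_kernel A B K \<longleftrightarrow> K \<in> A \<rightarrow>\<^sub>M prob_algebra B"

text \<open>Joint-measure identity  K(dy|x) mu(dx) = L(dx|y) m(dy), i.e. for all measurable
  rectangles A (in the space of mu) and B (in the space of m):
  integral over A of K(B|x) mu(dx) = integral over B of L(A|y) m(dy).\<close>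
definition joint_identity ::
  "('a \<Rightarrow> 'b measure) \<Rightarrow> 'a measure \<Rightarrow> ('b \<Rightarrow> 'a measure) \<Rightarrow> 'b measure \<Rightarrow> bool" where
  "joint_identity K mu L m \<longleftrightarrow>
     (\<forall>A\<in>sets mu. \<forall>B\<in>sets m.
        (\<integral>\<^sup>+x. indicator A x * emeasure (K x) B \<partial>mu) = (\<integral>\<^sup>+y. indicator B y * emeasure (L y) A \<partial>m))"

definition dirichlet_form :: "('a \<Rightarrow> 'a measure) \<Rightarrow> 'a measure \<Rightarrow> ('a \<Rightarrow> real) \<Rightarrow> ennreal" where
  "dirichlet_form R mu h = (\<integral>\<^sup>+\<eta>. (\<integral>\<^sup>+\<theta>. ennreal ((h \<theta> - h \<eta>)\<^sup>2) \<partial>(R \<eta>)) \<partial>mu) / 2"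

definition in_L2 :: "'a measure \<Rightarrow> ('a \<Rightarrow> real) \<Rightarrow> bool" where
  "in_L2 mu f \<longleftrightarrow> f \<in> borel_measurable mu \<and> integrable mu (\<lambda>x. (f x)\<^sup>2)"

end

theory Submission
  imports Defs
begin

lemma half_ext:
  fixes K :: "'a \<Rightarrow> 'b measure" and L :: "'b \<Rightarrow> 'a measure"
  assumes K: "K \<in> \<mu> \<rightarrow>\<^sub>M subprob_algebra m" and L: "L \<in> m \<rightarrow>\<^sub>M subprob_algebra \<mu>"
    and g: "g \<in> borel_measurable \<mu>"
    and base: "\<And>V. V \<in> sets m \<Longrightarrow> (\<integral>\<^sup>+a. g a * emeasure (K a) V \<partial>\<mu>) = (\<integral>\<^sup>+b. indicator V b * (\<integral>\<^sup>+a. g a \<partial>L b) \<partial>m)"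
    and k: "k \<in> borel_measurable m"
  shows "(\<integral>\<^sup>+a. g a * (\<integral>\<^sup>+b. k b \<partial>K a) \<partial>\<mu>) = (\<integral>\<^sup>+b. k b * (\<integral>\<^sup>+a. g a \<partial>L b) \<partial>m)"
proof -
  have Kf: "\<And>f. f \<in> borel_measurable m \<Longrightarrow> (\<lambda>a. \<integral>\<^sup>+b. f b \<partial>K a) \<in> borel_measurable \<mu>"
    by (rule measurable_compose[OF K nn_integral_measurable_subprob_algebra])
  have Lg: "(\<lambda>b. \<integral>\<^sup>+a. g a \<partial>L b) \<in> borel_measurable m"
    by (rule measurable_compose[OF L nn_integral_measurable_subprob_algebra[OF g]])
  have Kmeas: "\<And>a f. a \<in> space \<mu> \<Longrightarrow> f \<in> borel_measurable m \<Longrightarrow> f \<in> borel_measurable (K a)"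
    by (subst subprob_measurableD(3)[OF K]) auto
  have Kspace: "\<And>a. a \<in> space \<mu> \<Longrightarrow> space (K a) = space m"
    using subprob_measurableD(1)[OF K] by simp
  have Ksets: "\<And>a. a \<in> space \<mu> \<Longrightarrow> sets (K a) = sets m"
    using subprob_measurableD(2)[OF K] by simp
  show ?thesis using k
  proof induct
  case (cong f h)
  have "(\<integral>\<^sup>+a. g a * (\<integral>\<^sup>+b. f b \<partial>K a) \<partial>\<mu>) = (\<integral>\<^sup>+a. g a * (\<integral>\<^sup>+b. h b \<partial>K a) \<partial>\<mu>)"
    by (intro nn_integral_cong arg_cong2[where f=times] refl) (auto simp: Kspace cong(3))
  also have "\<dots> = (\<integral>\<^sup>+b. h b * (\<integral>\<^sup>+a. g a \<partial>L b) \<partial>m)" by (rule cong(4))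
  also have "\<dots> = (\<integral>\<^sup>+b. f b * (\<integral>\<^sup>+a. g a \<partial>L b) \<partial>m)"
    by (intro nn_integral_cong) (simp add: cong(3))
  finally show ?case .
  next
  case (set A)
  have "(\<integral>\<^sup>+a. g a * (\<integral>\<^sup>+b. indicator A b \<partial>K a) \<partial>\<mu>) = (\<integral>\<^sup>+a. g a * emeasure (K a) A \<partial>\<mu>)"
    by (intro nn_integral_cong) (simp add: Ksets set)
  then show ?case using base[OF set] by simp
  next
  case (mult u c)
  have "(\<integral>\<^sup>+a. g a * (\<integral>\<^sup>+b. c * u b \<partial>K a) \<partial>\<mu>) = (\<integral>\<^sup>+a. c * (g a * (\<integral>\<^sup>+b. u b \<partial>K a)) \<partial>\<mu>)"
    by (intro nn_integral_cong) (simp add: nn_integral_cmult Kmeas mult(2) ac_simps)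
  also have "\<dots> = c * (\<integral>\<^sup>+a. g a * (\<integral>\<^sup>+b. u b \<partial>K a) \<partial>\<mu>)"
    by (rule nn_integral_cmult) (intro borel_measurable_times_ennreal g Kf mult(2))
  also have "\<dots> = c * (\<integral>\<^sup>+b. u b * (\<integral>\<^sup>+a. g a \<partial>L b) \<partial>m)" by (simp add: mult(4))
  also have "\<dots> = (\<integral>\<^sup>+b. c * u b * (\<integral>\<^sup>+a. g a \<partial>L b) \<partial>m)"
    by (subst nn_integral_cmult[symmetric]) (auto intro!: borel_measurable_times_ennreal Lg mult(2) simp: ac_simps)
  finally show ?case .
  next
  case (add u v)
  have "(\<integral>\<^sup>+a. g a * (\<integral>\<^sup>+b. v b + u b \<partial>K a) \<partial>\<mu>) = (\<integral>\<^sup>+a. g a * (\<integral>\<^sup>+b. v b \<partial>K a) + g a * (\<integral>\<^sup>+b. u b \<partial>K a) \<partial>\<mu>)"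
    by (intro nn_integral_cong) (simp add: nn_integral_add Kmeas add distrib_left)
  also have "\<dots> = (\<integral>\<^sup>+a. g a * (\<integral>\<^sup>+b. v b \<partial>K a) \<partial>\<mu>) + (\<integral>\<^sup>+a. g a * (\<integral>\<^sup>+b. u b \<partial>K a) \<partial>\<mu>)"
    by (rule nn_integral_add) (intro borel_measurable_times_ennreal g Kf add)+
  also have "\<dots> = (\<integral>\<^sup>+b. v b * (\<integral>\<^sup>+a. g a \<partial>L b) \<partial>m) + (\<integral>\<^sup>+b. u b * (\<integral>\<^sup>+a. g a \<partial>L b) \<partial>m)"
    by (simp add: add)
  also have "\<dots> = (\<integral>\<^sup>+b. (v b + u b) * (\<integral>\<^sup>+a. g a \<partial>L b) \<partial>m)"
    by (subst nn_integral_add[symmetric]) (auto intro!: borel_measurable_times_ennreal Lg add simp: distrib_right)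
  finally show ?case .
  next
  case (seq U)
  have supeq: "(SUP i. U i) = (\<lambda>b. SUP i. U i b)" by (rule ext) (rule SUP_apply)
  have inc: "incseq (\<lambda>i a. g a * (\<integral>\<^sup>+b. U i b \<partial>K a))"
    using seq(4) by (auto simp: incseq_def le_fun_def intro!: mult_left_mono nn_integral_mono)
  have inc2: "incseq (\<lambda>i b. U i b * (\<integral>\<^sup>+a. g a \<partial>L b))"
    using seq(4) by (auto simp: incseq_def le_fun_def intro!: mult_right_mono)
  have "(\<integral>\<^sup>+a. g a * (\<integral>\<^sup>+b. (SUP i. U i) b \<partial>K a) \<partial>\<mu>) = (\<integral>\<^sup>+a. (SUP i. g a * (\<integral>\<^sup>+b. U i b \<partial>K a)) \<partial>\<mu>)"
    by (intro nn_integral_cong) (simp add: supeq nn_integral_monotone_convergence_SUP Kmeas seq SUP_mult_left_ennreal)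
  also have "\<dots> = (SUP i. (\<integral>\<^sup>+a. g a * (\<integral>\<^sup>+b. U i b \<partial>K a) \<partial>\<mu>))"
    by (rule nn_integral_monotone_convergence_SUP[OF inc]) (intro borel_measurable_times_ennreal g Kf seq)
  also have "\<dots> = (SUP i. (\<integral>\<^sup>+b. U i b * (\<integral>\<^sup>+a. g a \<partial>L b) \<partial>m))" by (simp add: seq(3))
  also have "\<dots> = (\<integral>\<^sup>+b. (SUP i. U i b * (\<integral>\<^sup>+a. g a \<partial>L b)) \<partial>m)"
    by (rule nn_integral_monotone_convergence_SUP[OF inc2, symmetric]) (intro borel_measurable_times_ennreal Lg seq)
  also have "\<dots> = (\<integral>\<^sup>+b. (SUP i. U i) b * (\<integral>\<^sup>+a. g a \<partial>L b) \<partial>m)"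
    by (simp add: supeq SUP_mult_right_ennreal)
  finally show ?case .
  qed
qed


lemma joint_ext:
  fixes K :: "'a \<Rightarrow> 'b measure" and L :: "'b \<Rightarrow> 'a measure"
  assumes K: "K \<in> \<mu> \<rightarrow>\<^sub>M subprob_algebra m" and L: "L \<in> m \<rightarrow>\<^sub>M subprob_algebra \<mu>"
    and base: "\<And>U V. U \<in> sets \<mu> \<Longrightarrow> V \<in> sets m \<Longrightarrow>
      (\<integral>\<^sup>+a. indicator U a * emeasure (K a) V \<partial>\<mu>) = (\<integral>\<^sup>+b. indicator V b * emeasure (L b) U \<partial>m)"
    and f: "f \<in> borel_measurable \<mu>" and k: "k \<in> borel_measurable m"
  shows "(\<integral>\<^sup>+a. f a * (\<integral>\<^sup>+b. k b \<partial>K a) \<partial>\<mu>) = (\<integral>\<^sup>+b. k b * (\<integral>\<^sup>+a. f a \<partial>L b) \<partial>m)"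
proof -
  have Lind: "\<And>b U. b \<in> space m \<Longrightarrow> U \<in> sets \<mu> \<Longrightarrow> (\<integral>\<^sup>+a. indicator U a \<partial>L b) = emeasure (L b) U"
    using subprob_measurableD(2)[OF L] by (simp add: nn_integral_indicator)
  have Kind: "\<And>a V. a \<in> space \<mu> \<Longrightarrow> V \<in> sets m \<Longrightarrow> (\<integral>\<^sup>+b. indicator V b \<partial>K a) = emeasure (K a) V"
    using subprob_measurableD(2)[OF K] by (simp add: nn_integral_indicator)
  have step1: "(\<integral>\<^sup>+a. indicator U a * (\<integral>\<^sup>+b. k' b \<partial>K a) \<partial>\<mu>) = (\<integral>\<^sup>+b. k' b * (\<integral>\<^sup>+a. indicator U a \<partial>L b) \<partial>m)"
    if U: "U \<in> sets \<mu>" and k': "k' \<in> borel_measurable m" for U k'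
  proof (rule half_ext[OF K L _ _ k'])
    show "indicator U \<in> borel_measurable \<mu>" using U by simp
    fix V assume V: "V \<in> sets m"
    have "(\<integral>\<^sup>+b. indicator V b * (\<integral>\<^sup>+a. indicator U a \<partial>L b) \<partial>m) = (\<integral>\<^sup>+b. indicator V b * emeasure (L b) U \<partial>m)"
      by (intro nn_integral_cong) (simp add: Lind U)
    then show "(\<integral>\<^sup>+a. indicator U a * emeasure (K a) V \<partial>\<mu>) = (\<integral>\<^sup>+b. indicator V b * (\<integral>\<^sup>+a. indicator U a \<partial>L b) \<partial>m)"
      using base[OF U V] by simp
  qed
  have "(\<integral>\<^sup>+b. k b * (\<integral>\<^sup>+a. f a \<partial>L b) \<partial>m) = (\<integral>\<^sup>+a. f a * (\<integral>\<^sup>+b. k b \<partial>K a) \<partial>\<mu>)"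
  proof (rule half_ext[OF L K k _ f])
    fix V assume V: "V \<in> sets \<mu>"
    have "(\<integral>\<^sup>+b. k b * emeasure (L b) V \<partial>m) = (\<integral>\<^sup>+b. k b * (\<integral>\<^sup>+a. indicator V a \<partial>L b) \<partial>m)"
      by (intro nn_integral_cong) (simp add: Lind V)
    also have "\<dots> = (\<integral>\<^sup>+a. indicator V a * (\<integral>\<^sup>+b. k b \<partial>K a) \<partial>\<mu>)"
      by (rule step1[OF V k, symmetric])
    finally show "(\<integral>\<^sup>+b. k b * emeasure (L b) V \<partial>m) = (\<integral>\<^sup>+a. indicator V a * (\<integral>\<^sup>+b. k b \<partial>K a) \<partial>\<mu>)" .
  qed
  then show ?thesis by simp
qed

lemma double_add:
  assumes R: "R \<in> N \<rightarrow>\<^sub>M subprob_algebra N'"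
    and u[measurable]: "(\<lambda>(x,y). u x y) \<in> borel_measurable (N \<Otimes>\<^sub>M N')"
    and v[measurable]: "(\<lambda>(x,y). v x y) \<in> borel_measurable (N \<Otimes>\<^sub>M N')"
  shows "(\<integral>\<^sup>+x. \<integral>\<^sup>+y. u x y + v x y \<partial>R x \<partial>N) = (\<integral>\<^sup>+x. \<integral>\<^sup>+y. u x y \<partial>R x \<partial>N) + (\<integral>\<^sup>+x. \<integral>\<^sup>+y. v x y \<partial>R x \<partial>N)"
proof -
  have "(\<integral>\<^sup>+x. \<integral>\<^sup>+y. u x y + v x y \<partial>R x \<partial>N) = (\<integral>\<^sup>+x. (\<integral>\<^sup>+y. u x y \<partial>R x) + (\<integral>\<^sup>+y. v x y \<partial>R x) \<partial>N)"
  proof (intro nn_integral_cong nn_integral_add)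
    fix x assume x: "x \<in> space N"
    show "u x \<in> borel_measurable (R x)" using measurable_Pair2[OF u x] by (subst subprob_measurableD(3)[OF R x]) simp
    show "v x \<in> borel_measurable (R x)" using measurable_Pair2[OF v x] by (subst subprob_measurableD(3)[OF R x]) simp
  qed
  also have "\<dots> = (\<integral>\<^sup>+x. \<integral>\<^sup>+y. u x y \<partial>R x \<partial>N) + (\<integral>\<^sup>+x. \<integral>\<^sup>+y. v x y \<partial>R x \<partial>N)"
    by (intro nn_integral_add nn_integral_measurable_subprob_algebra2[OF _ R] u v)
  finally show ?thesis .
qed

lemma double_mono:
  assumes R: "R \<in> N \<rightarrow>\<^sub>M subprob_algebra N'"
    and le: "\<And>x y. x \<in> space N \<Longrightarrow> y \<in> space N' \<Longrightarrow> u x y \<le> v x y"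
  shows "(\<integral>\<^sup>+x. \<integral>\<^sup>+y. u x y \<partial>R x \<partial>N) \<le> (\<integral>\<^sup>+x. \<integral>\<^sup>+y. v x y \<partial>R x \<partial>N)"
  by (intro nn_integral_mono) (auto simp: subprob_measurableD(1)[OF R] le)

lemma bind_prod:
  assumes A: "A \<in> space (subprob_algebra X)" and N: "N \<in> X \<rightarrow>\<^sub>M subprob_algebra Y"
    and c: "c \<in> borel_measurable Y"
  shows "(\<integral>\<^sup>+a. c a * r \<partial>(A \<bind> N)) = r * (\<integral>\<^sup>+x. \<integral>\<^sup>+a. c a \<partial>N x \<partial>A)"
proof -
  have sA: "sets A = sets X" using A by (simp add: space_subprob_algebra)
  then have spA: "space A = space X" by (rule sets_eq_imp_space_eq)
  have NA: "N \<in> A \<rightarrow>\<^sub>M subprob_algebra Y" using N by (simp add: measurable_cong_sets[OF sA refl])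
  have "(\<integral>\<^sup>+a. c a * r \<partial>(A \<bind> N)) = (\<integral>\<^sup>+x. \<integral>\<^sup>+a. c a * r \<partial>N x \<partial>A)"
    by (rule nn_integral_bind[OF _ NA]) (intro borel_measurable_times_ennreal c measurable_const, simp)
  also have "\<dots> = (\<integral>\<^sup>+x. (\<integral>\<^sup>+a. c a \<partial>N x) * r \<partial>A)"
  proof (intro nn_integral_cong nn_integral_multc)
    fix x assume "x \<in> space A"
    then have "x \<in> space X" using spA by simp
    then show "c \<in> borel_measurable (N x)" using c by (subst subprob_measurableD(3)[OF N]) simp_all
  qed
  also have "\<dots> = (\<integral>\<^sup>+x. \<integral>\<^sup>+a. c a \<partial>N x \<partial>A) * r"
    by (rule nn_integral_multc)
      (simp add: measurable_cong_sets[OF sA refl] measurable_compose[OF N nn_integral_measurable_subprob_algebra[OF c]])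
  finally show ?thesis by (simp add: mult.commute)
qed

lemma prob_algebra_cong: "sets M = sets N \<Longrightarrow> prob_algebra M = prob_algebra N"
  unfolding prob_algebra_def by (metis subprob_algebra_cong)

lemma real_key:
  fixes x y :: real
  shows "(x - y)\<^sup>2 + 2 * max x 0 * max y 0 + 2 * max (-x) 0 * max (-y) 0
       = x\<^sup>2 + y\<^sup>2 + 2 * max x 0 * max (-y) 0 + 2 * max (-x) 0 * max y 0"
  by (cases "0 \<le> x"; cases "0 \<le> y") (simp_all add: max_def power2_eq_square algebra_simps)

lemma real_key2:
  fixes x y :: real
  shows "2 * max x 0 * max y 0 + 2 * max (-x) 0 * max (-y) 0 \<le> x\<^sup>2 + y\<^sup>2"
proof -
  have "0 \<le> (x - y)\<^sup>2" "0 \<le> x\<^sup>2" "0 \<le> y\<^sup>2" by simp_all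
  then show ?thesis
    by (cases "0 \<le> x"; cases "0 \<le> y") (simp_all add: max_def power2_eq_square algebra_simps)
qed

lemma ennreal_lin:
  fixes d p q r w X Y :: real
  assumes "0 \<le> d" "0 \<le> p" "0 \<le> q" "0 \<le> r" "0 \<le> w" "0 \<le> X" "0 \<le> Y"
    and eq: "d + 2*p*q + 2*r*w = X + Y + 2*p*w + 2*r*q"
  shows "ennreal d + ennreal (2*p) * ennreal q + ennreal (2*r) * ennreal w
       = ennreal X * 1 + 1 * ennreal Y + ennreal (2*p) * ennreal w + ennreal (2*r) * ennreal q"
proof -
  have "ennreal (d + 2*p*q + 2*r*w) = ennreal (X + Y + 2*p*w + 2*r*q)" using eq by simp
  then show ?thesis using assms(1-7) by (simp add: ennreal_mult ennreal_plus)
qed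

lemma ennreal_lin2:
  fixes p q r w X Y :: real
  assumes "0 \<le> p" "0 \<le> q" "0 \<le> r" "0 \<le> w" "0 \<le> X" "0 \<le> Y"
    and le: "2*p*q + 2*r*w \<le> X + Y"
  shows "ennreal (2*p) * ennreal q + ennreal (2*r) * ennreal w \<le> ennreal X * 1 + 1 * ennreal Y"
proof -
  have "ennreal (2*p*q + 2*r*w) \<le> ennreal (X + Y)" using le by (rule ennreal_leI)
  then show ?thesis using assms(1-6) by (simp add: ennreal_mult ennreal_plus)
qed

theorem theorem3p3:
  fixes P :: "'t::polish_space \<Rightarrow> 'x::polish_space measure"
    and \<nu> :: "'t measure" and M :: "'x measure"
    and Q :: "'x \<Rightarrow> 't measure"
    and t :: "'t \<Rightarrow> real"
    and \<pi> :: "real \<Rightarrow> 't measure"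
    and Qt :: "'x \<Rightarrow> real measure"
    and ht :: "real \<Rightarrow> real"
  defines "S \<equiv> restrict_space (borel :: real measure) {0..}"
  defines "s \<equiv> distr \<nu> S t"
  defines "Pt \<equiv> (\<lambda>a. \<pi> a \<bind> P)"
  assumes P_kernel: "markov_kernel borel borel P"
    and nu_sets: "sets \<nu> = sets borel"
    and nu_sigma: "sigma_finite_measure \<nu>"
    and M_sets: "sets M = sets borel"
    and M_marginal: "\<forall>B\<in>sets borel. emeasure M B = (\<integral>\<^sup>+\<theta>. emeasure (P \<theta>) B \<partial>\<nu>)"
    and M_sigma: "sigma_finite_measure M"
    and Q_kernel: "markov_kernel borel borel Q"
    and PQ: "joint_identity P \<nu> Q M"
    and t_meas: "t \<in> borel \<rightarrow>\<^sub>M S"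
    and partition: "\<exists>A :: nat \<Rightarrow> real set. (\<forall>i. A i \<in> sets borel) \<and> disjoint_family A
        \<and> (\<Union>i. A i) = {0..}
        \<and> (\<forall>i. 0 < emeasure \<nu> (t -` A i) \<and> emeasure \<nu> (t -` A i) < \<infinity>)"
    and pi_kernel: "markov_kernel S borel \<pi>"
    and pi_disint: "\<forall>f1 f2. f1 \<in> borel_measurable borel \<longrightarrow> (\<forall>\<theta>. 0 \<le> f1 \<theta>) \<longrightarrow>
        f2 \<in> borel_measurable S \<longrightarrow> (\<forall>a. 0 \<le> f2 a) \<longrightarrow>
        (\<integral>\<^sup>+\<theta>. ennreal (f2 (t \<theta>) * f1 \<theta>) \<partial>\<nu>)
          = (\<integral>\<^sup>+a. ennreal (f2 a) * (\<integral>\<^sup>+\<theta>. ennreal (f1 \<theta>) \<partial>(\<pi> a)) \<partial>s)"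
    and Qt_kernel: "markov_kernel borel S Qt"
    and PQt: "joint_identity Pt s Qt M"
    and ht_L2: "in_L2 s ht"
  shows "in_L2 \<nu> (\<lambda>\<theta>. ht (t \<theta>))
    \<and> dirichlet_form (\<lambda>b. Pt b \<bind> Qt) s ht = dirichlet_form (\<lambda>\<eta>. P \<eta> \<bind> Q) \<nu> (\<lambda>\<theta>. ht (t \<theta>))"
proof -
  have Ssp: "space S = {0..}" unfolding S_def by (simp add: space_restrict_space)
  have sets_s: "sets s = sets S" unfolding s_def by simp
  have space_s: "space s = {0..}" unfolding s_def using Ssp by simp
  have t_s[measurable]: "t \<in> \<nu> \<rightarrow>\<^sub>M s"
    using t_meas by (simp add: measurable_cong_sets[OF nu_sets sets_s])
  have ht_m[measurable]: "ht \<in> borel_measurable s" using ht_L2 unfolding in_L2_def by simp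
  have pM: "prob_algebra M = prob_algebra borel" by (rule prob_algebra_cong[OF M_sets])
  have pnu: "prob_algebra \<nu> = prob_algebra borel" by (rule prob_algebra_cong[OF nu_sets])
  have ps: "prob_algebra s = prob_algebra S" by (rule prob_algebra_cong[OF sets_s])
  have P': "P \<in> \<nu> \<rightarrow>\<^sub>M prob_algebra M"
    using P_kernel by (simp add: markov_kernel_def pM measurable_cong_sets[OF nu_sets refl])
  have Q': "Q \<in> M \<rightarrow>\<^sub>M prob_algebra \<nu>"
    using Q_kernel by (simp add: markov_kernel_def pnu measurable_cong_sets[OF M_sets refl])
  have pi': "\<pi> \<in> s \<rightarrow>\<^sub>M prob_algebra \<nu>"
    using pi_kernel by (simp add: markov_kernel_def pnu measurable_cong_sets[OF sets_s refl])
  have Qt': "Qt \<in> M \<rightarrow>\<^sub>M prob_algebra s"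
    using Qt_kernel by (simp add: markov_kernel_def ps measurable_cong_sets[OF M_sets refl])
  have Pt': "Pt \<in> s \<rightarrow>\<^sub>M prob_algebra M"
    unfolding Pt_def by (rule measurable_bind_prob_space[OF pi' P'])
  have Rt': "(\<lambda>b. Pt b \<bind> Qt) \<in> s \<rightarrow>\<^sub>M prob_algebra s"
    by (rule measurable_bind_prob_space[OF Pt' Qt'])
  have R': "(\<lambda>\<eta>. P \<eta> \<bind> Q) \<in> \<nu> \<rightarrow>\<^sub>M prob_algebra \<nu>"
    by (rule measurable_bind_prob_space[OF P' Q'])
  have ret': "(\<lambda>\<eta>. return s (t \<eta>)) \<in> \<nu> \<rightarrow>\<^sub>M prob_algebra s"
    by (rule measurable_compose[OF t_s measurable_return_prob_space])
  note P_sub = measurable_prob_algebraD[OF P']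
  note Q_sub = measurable_prob_algebraD[OF Q']
  note pi_sub = measurable_prob_algebraD[OF pi']
  note Qt_sub = measurable_prob_algebraD[OF Qt']
  note Pt_sub = measurable_prob_algebraD[OF Pt']
  note Rt_sub = measurable_prob_algebraD[OF Rt']
  note R_sub = measurable_prob_algebraD[OF R']
  note ret_sub = measurable_prob_algebraD[OF ret']

  have GLa: "(\<integral>\<^sup>+\<eta>. f \<eta> * (\<integral>\<^sup>+x. k x \<partial>P \<eta>) \<partial>\<nu>) = (\<integral>\<^sup>+x. k x * (\<integral>\<^sup>+\<eta>. f \<eta> \<partial>Q x) \<partial>M)"
    if "f \<in> borel_measurable \<nu>" "k \<in> borel_measurable M" for f k
    by (rule joint_ext[OF P_sub Q_sub _ that]) (use PQ in \<open>auto simp: joint_identity_def\<close>)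
  have GLb: "(\<integral>\<^sup>+b. f b * (\<integral>\<^sup>+x. k x \<partial>Pt b) \<partial>s) = (\<integral>\<^sup>+x. k x * (\<integral>\<^sup>+b. f b \<partial>Qt x) \<partial>M)"
    if "f \<in> borel_measurable s" "k \<in> borel_measurable M" for f k
    by (rule joint_ext[OF Pt_sub Qt_sub _ that]) (use PQt in \<open>auto simp: joint_identity_def\<close>)
  have GLc: "(\<integral>\<^sup>+b. f b * (\<integral>\<^sup>+\<eta>. k \<eta> \<partial>\<pi> b) \<partial>s) = (\<integral>\<^sup>+\<eta>. k \<eta> * f (t \<eta>) \<partial>\<nu>)"
    if f: "f \<in> borel_measurable s" and k: "k \<in> borel_measurable \<nu>" for f k
  proof -
    have "(\<integral>\<^sup>+b. f b * (\<integral>\<^sup>+\<eta>. k \<eta> \<partial>\<pi> b) \<partial>s) = (\<integral>\<^sup>+\<eta>. k \<eta> * (\<integral>\<^sup>+b. f b \<partial>return s (t \<eta>)) \<partial>\<nu>)"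
    proof (rule joint_ext[OF pi_sub ret_sub _ f k])
      fix U V assume U: "U \<in> sets s" and V: "V \<in> sets \<nu>"
      have "(\<integral>\<^sup>+\<eta>. indicator V \<eta> * emeasure (return s (t \<eta>)) U \<partial>\<nu>)
          = (\<integral>\<^sup>+\<eta>. ennreal (indicator U (t \<eta>) * indicator V \<eta>) \<partial>\<nu>)"
        using U by (intro nn_integral_cong) (auto split: split_indicator)
      also have "\<dots> = (\<integral>\<^sup>+a. ennreal (indicator U a) * (\<integral>\<^sup>+\<theta>. ennreal (indicator V \<theta>) \<partial>(\<pi> a)) \<partial>s)"
      proof (rule pi_disint[rule_format, of "indicator V" "indicator U"])
        show "indicator V \<in> borel_measurable borel" using V nu_sets by simp
        show "indicator U \<in> borel_measurable S" using U sets_s by simp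
      qed auto
      also have "\<dots> = (\<integral>\<^sup>+b. indicator U b * emeasure (\<pi> b) V \<partial>s)"
      proof (intro nn_integral_cong)
        fix b assume "b \<in> space s"
        then have "sets (\<pi> b) = sets \<nu>" by (rule subprob_measurableD(2)[OF pi_sub])
        then show "ennreal (indicator U b) * (\<integral>\<^sup>+\<theta>. ennreal (indicator V \<theta>) \<partial>(\<pi> b)) = indicator U b * emeasure (\<pi> b) V"
          using V by (simp add: ennreal_indicator nn_integral_indicator)
      qed
      finally show "(\<integral>\<^sup>+b. indicator U b * emeasure (\<pi> b) V \<partial>s) = (\<integral>\<^sup>+\<eta>. indicator V \<eta> * emeasure (return s (t \<eta>)) U \<partial>\<nu>)"
        by simp
    qed
    also have "\<dots> = (\<integral>\<^sup>+\<eta>. k \<eta> * f (t \<eta>) \<partial>\<nu>)"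
      by (intro nn_integral_cong) (simp add: nn_integral_return[OF measurable_space[OF t_s] f])
    finally show ?thesis .
  qed

  have Pspace: "\<And>\<eta>. \<eta> \<in> space \<nu> \<Longrightarrow> P \<eta> \<in> space (subprob_algebra M)"
    by (rule measurable_space[OF P_sub])
  have pispace: "\<And>b. b \<in> space s \<Longrightarrow> \<pi> b \<in> space (subprob_algebra \<nu>)"
    by (rule measurable_space[OF pi_sub])
  have Ptspace: "\<And>b. b \<in> space s \<Longrightarrow> Pt b \<in> space (subprob_algebra M)"
    by (rule measurable_space[OF Pt_sub])
  have pisets: "\<And>b. b \<in> space s \<Longrightarrow> sets (\<pi> b) = sets \<nu>"
    by (rule subprob_measurableD(2)[OF pi_sub])

  have L_C: "(\<integral>\<^sup>+x. k x * (\<integral>\<^sup>+a. c a \<partial>Qt x) \<partial>M) = (\<integral>\<^sup>+x. k x * (\<integral>\<^sup>+\<theta>. c (t \<theta>) \<partial>Q x) \<partial>M)"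
    if k[measurable]: "k \<in> borel_measurable M" and c[measurable]: "c \<in> borel_measurable s" for k c
  proof -
    have Pk[measurable]: "(\<lambda>\<eta>. \<integral>\<^sup>+x. k x \<partial>P \<eta>) \<in> borel_measurable \<nu>"
      by (rule measurable_compose[OF P_sub nn_integral_measurable_subprob_algebra[OF k]])
    have "(\<integral>\<^sup>+x. k x * (\<integral>\<^sup>+a. c a \<partial>Qt x) \<partial>M) = (\<integral>\<^sup>+b. c b * (\<integral>\<^sup>+x. k x \<partial>Pt b) \<partial>s)"
      by (rule GLb[OF c k, symmetric])
    also have "\<dots> = (\<integral>\<^sup>+b. c b * (\<integral>\<^sup>+\<eta>. (\<integral>\<^sup>+x. k x \<partial>P \<eta>) \<partial>\<pi> b) \<partial>s)"
    proof (intro nn_integral_cong arg_cong2[where f=times] refl)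
      fix b assume b: "b \<in> space s"
      have Pb: "P \<in> \<pi> b \<rightarrow>\<^sub>M subprob_algebra M"
        using P_sub by (simp add: measurable_cong_sets[OF pisets[OF b] refl])
      show "(\<integral>\<^sup>+x. k x \<partial>Pt b) = (\<integral>\<^sup>+\<eta>. (\<integral>\<^sup>+x. k x \<partial>P \<eta>) \<partial>\<pi> b)"
        unfolding Pt_def by (rule nn_integral_bind[OF k Pb])
    qed
    also have "\<dots> = (\<integral>\<^sup>+\<eta>. (\<integral>\<^sup>+x. k x \<partial>P \<eta>) * c (t \<eta>) \<partial>\<nu>)"
      by (rule GLc[OF c Pk])
    also have "\<dots> = (\<integral>\<^sup>+\<eta>. c (t \<eta>) * (\<integral>\<^sup>+x. k x \<partial>P \<eta>) \<partial>\<nu>)"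
      by (simp add: mult.commute)
    also have "\<dots> = (\<integral>\<^sup>+x. k x * (\<integral>\<^sup>+\<theta>. c (t \<theta>) \<partial>Q x) \<partial>M)"
      by (rule GLa) measurable
    finally show ?thesis .
  qed

  define \<Phi> where "\<Phi> u = (\<integral>\<^sup>+b. \<integral>\<^sup>+a. u a b \<partial>(Pt b \<bind> Qt) \<partial>s)" for u :: "real \<Rightarrow> real \<Rightarrow> ennreal"
  define \<Psi> where "\<Psi> u = (\<integral>\<^sup>+\<eta>. \<integral>\<^sup>+\<theta>. u (t \<theta>) (t \<eta>) \<partial>(P \<eta> \<bind> Q) \<partial>\<nu>)" for u :: "real \<Rightarrow> real \<Rightarrow> ennreal"

  have PhiM: "\<Phi> (\<lambda>a b. c a * d b) = (\<integral>\<^sup>+x. (\<integral>\<^sup>+a. c a \<partial>Qt x) * (\<integral>\<^sup>+a. d a \<partial>Qt x) \<partial>M)"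
    if c[measurable]: "c \<in> borel_measurable s" and d[measurable]: "d \<in> borel_measurable s" for c d
  proof -
    have Kc[measurable]: "(\<lambda>x. \<integral>\<^sup>+a. c a \<partial>Qt x) \<in> borel_measurable M"
      by (rule measurable_compose[OF Qt_sub nn_integral_measurable_subprob_algebra[OF c]])
    have "\<Phi> (\<lambda>a b. c a * d b) = (\<integral>\<^sup>+b. d b * (\<integral>\<^sup>+x. (\<integral>\<^sup>+a. c a \<partial>Qt x) \<partial>Pt b) \<partial>s)"
      unfolding \<Phi>_def by (intro nn_integral_cong bind_prod[OF Ptspace Qt_sub c])
    also have "\<dots> = (\<integral>\<^sup>+x. (\<integral>\<^sup>+a. c a \<partial>Qt x) * (\<integral>\<^sup>+a. d a \<partial>Qt x) \<partial>M)"
      by (rule GLb[OF d Kc])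
    finally show ?thesis .
  qed
  have PsiM: "\<Psi> (\<lambda>a b. c a * d b) = (\<integral>\<^sup>+x. (\<integral>\<^sup>+\<theta>. c (t \<theta>) \<partial>Q x) * (\<integral>\<^sup>+\<theta>. d (t \<theta>) \<partial>Q x) \<partial>M)"
    if c[measurable]: "c \<in> borel_measurable s" and d[measurable]: "d \<in> borel_measurable s" for c d
  proof -
    have ct[measurable]: "(\<lambda>\<theta>. c (t \<theta>)) \<in> borel_measurable \<nu>" by measurable
    have Kc[measurable]: "(\<lambda>x. \<integral>\<^sup>+\<theta>. c (t \<theta>) \<partial>Q x) \<in> borel_measurable M"
      by (rule measurable_compose[OF Q_sub nn_integral_measurable_subprob_algebra[OF ct]])
    have "\<Psi> (\<lambda>a b. c a * d b) = (\<integral>\<^sup>+\<eta>. d (t \<eta>) * (\<integral>\<^sup>+x. (\<integral>\<^sup>+\<theta>. c (t \<theta>) \<partial>Q x) \<partial>P \<eta>) \<partial>\<nu>)"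
      unfolding \<Psi>_def by (intro nn_integral_cong bind_prod[OF Pspace Q_sub ct])
    also have "\<dots> = (\<integral>\<^sup>+x. (\<integral>\<^sup>+\<theta>. c (t \<theta>) \<partial>Q x) * (\<integral>\<^sup>+\<theta>. d (t \<theta>) \<partial>Q x) \<partial>M)"
      by (rule GLa) measurable
    finally show ?thesis .
  qed
  have prod: "\<Phi> (\<lambda>a b. c a * d b) = \<Psi> (\<lambda>a b. c a * d b)"
    if c[measurable]: "c \<in> borel_measurable s" and d[measurable]: "d \<in> borel_measurable s" for c d
  proof -
    have Kc[measurable]: "(\<lambda>x. \<integral>\<^sup>+a. c a \<partial>Qt x) \<in> borel_measurable M"
      by (rule measurable_compose[OF Qt_sub nn_integral_measurable_subprob_algebra[OF c]])
    have dt[measurable]: "(\<lambda>\<theta>. d (t \<theta>)) \<in> borel_measurable \<nu>" by measurable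
    have Kd'[measurable]: "(\<lambda>x. \<integral>\<^sup>+\<theta>. d (t \<theta>) \<partial>Q x) \<in> borel_measurable M"
      by (rule measurable_compose[OF Q_sub nn_integral_measurable_subprob_algebra[OF dt]])
    have "\<Phi> (\<lambda>a b. c a * d b) = (\<integral>\<^sup>+x. (\<integral>\<^sup>+a. c a \<partial>Qt x) * (\<integral>\<^sup>+a. d a \<partial>Qt x) \<partial>M)"
      by (rule PhiM[OF c d])
    also have "\<dots> = (\<integral>\<^sup>+x. (\<integral>\<^sup>+a. c a \<partial>Qt x) * (\<integral>\<^sup>+\<theta>. d (t \<theta>) \<partial>Q x) \<partial>M)"
      by (rule L_C[OF Kc d])
    also have "\<dots> = (\<integral>\<^sup>+x. (\<integral>\<^sup>+\<theta>. d (t \<theta>) \<partial>Q x) * (\<integral>\<^sup>+a. c a \<partial>Qt x) \<partial>M)"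
      by (simp add: mult.commute)
    also have "\<dots> = (\<integral>\<^sup>+x. (\<integral>\<^sup>+\<theta>. d (t \<theta>) \<partial>Q x) * (\<integral>\<^sup>+\<theta>. c (t \<theta>) \<partial>Q x) \<partial>M)"
      by (rule L_C[OF Kd' c])
    also have "\<dots> = \<Psi> (\<lambda>a b. c a * d b)"
      by (simp add: PsiM[OF c d] mult.commute)
    finally show ?thesis .
  qed

  have Phi_add: "\<Phi> (\<lambda>a b. u a b + v a b) = \<Phi> u + \<Phi> v"
    if u[measurable]: "(\<lambda>(a,b). u a b) \<in> borel_measurable (s \<Otimes>\<^sub>M s)"
      and v[measurable]: "(\<lambda>(a,b). v a b) \<in> borel_measurable (s \<Otimes>\<^sub>M s)" for u v
    unfolding \<Phi>_def by (rule double_add[OF Rt_sub]) measurable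
  have Psi_add: "\<Psi> (\<lambda>a b. u a b + v a b) = \<Psi> u + \<Psi> v"
    if u[measurable]: "(\<lambda>(a,b). u a b) \<in> borel_measurable (s \<Otimes>\<^sub>M s)"
      and v[measurable]: "(\<lambda>(a,b). v a b) \<in> borel_measurable (s \<Otimes>\<^sub>M s)" for u v
    unfolding \<Psi>_def by (rule double_add[OF R_sub]) measurable
  have Phi_mono: "\<Phi> u \<le> \<Phi> v" if "\<And>a b. u a b \<le> v a b" for u v
    unfolding \<Phi>_def by (rule double_mono[OF Rt_sub]) (simp add: that)

  have Qt1: "emeasure (Qt x) (space (Qt x)) = 1" if "x \<in> space M" for x
  proof -
    have "prob_space (Qt x)" using measurable_space[OF Qt' that] by (simp add: space_prob_algebra)
    then show ?thesis by (simp add: prob_space.emeasure_space_1)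
  qed
  have Pt1: "emeasure (Pt b) (space (Pt b)) = 1" if "b \<in> space s" for b
  proof -
    have "prob_space (Pt b)" using measurable_space[OF Pt' that] by (simp add: space_prob_algebra)
    then show ?thesis by (simp add: prob_space.emeasure_space_1)
  qed
  have Phi_side: "\<Phi> (\<lambda>a b. c a * 1) = (\<integral>\<^sup>+b. c b \<partial>s) \<and> \<Phi> (\<lambda>a b. 1 * c b) = (\<integral>\<^sup>+b. c b \<partial>s)"
    if c[measurable]: "c \<in> borel_measurable s" for c
  proof -
    have eq: "(\<integral>\<^sup>+x. (\<integral>\<^sup>+a. c a \<partial>Qt x) \<partial>M) = (\<integral>\<^sup>+b. c b \<partial>s)"
    proof -
      have "(\<integral>\<^sup>+x. (\<integral>\<^sup>+a. c a \<partial>Qt x) \<partial>M) = (\<integral>\<^sup>+x. 1 * (\<integral>\<^sup>+a. c a \<partial>Qt x) \<partial>M)" by simp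
      also have "\<dots> = (\<integral>\<^sup>+b. c b * (\<integral>\<^sup>+x. 1 \<partial>Pt b) \<partial>s)"
        by (rule GLb[OF c, symmetric]) simp
      also have "\<dots> = (\<integral>\<^sup>+b. c b \<partial>s)"
        by (intro nn_integral_cong) (simp add: Pt1)
      finally show ?thesis .
    qed
    have "\<Phi> (\<lambda>a b. c a * 1) = (\<integral>\<^sup>+x. (\<integral>\<^sup>+a. c a \<partial>Qt x) \<partial>M)"
      by (subst PhiM[OF c]) (auto intro!: nn_integral_cong simp: Qt1)
    moreover have "\<Phi> (\<lambda>a b. 1 * c b) = (\<integral>\<^sup>+x. (\<integral>\<^sup>+a. c a \<partial>Qt x) \<partial>M)"
      by (subst PhiM[OF _ c]) (auto intro!: nn_integral_cong simp: Qt1)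
    ultimately show ?thesis using eq by simp
  qed

  define h2 where "h2 a = ennreal ((ht a)\<^sup>2)" for a
  define pp where "pp a = ennreal (max (ht a) 0)" for a
  define nn where "nn a = ennreal (max (- ht a) 0)" for a
  define pp2 where "pp2 a = ennreal (2 * max (ht a) 0)" for a
  define nn2 where "nn2 a = ennreal (2 * max (- ht a) 0)" for a
  define G where "G a b = ennreal ((ht a - ht b)\<^sup>2)" for a b
  have [measurable]: "h2 \<in> borel_measurable s" "pp \<in> borel_measurable s" "nn \<in> borel_measurable s"
    "pp2 \<in> borel_measurable s" "nn2 \<in> borel_measurable s"
    unfolding h2_def pp_def nn_def pp2_def nn2_def by measurable
  have [measurable]: "(\<lambda>(a,b). G a b) \<in> borel_measurable (s \<Otimes>\<^sub>M s)"
    unfolding G_def by measurable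

  have key: "G a b + pp2 a * pp b + nn2 a * nn b = h2 a * 1 + 1 * h2 b + pp2 a * nn b + nn2 a * pp b" for a b
    unfolding G_def pp2_def pp_def nn2_def nn_def h2_def
    by (rule ennreal_lin) (simp_all add: real_key)
  have key2: "pp2 a * pp b + nn2 a * nn b \<le> h2 a * 1 + 1 * h2 b" for a b
    unfolding pp2_def pp_def nn2_def nn_def h2_def
    by (rule ennreal_lin2) (simp_all add: real_key2)

  have fin_h2: "(\<integral>\<^sup>+b. h2 b \<partial>s) < \<infinity>"
    using ht_L2 unfolding in_L2_def h2_def integrable_iff_bounded by simp

  have PhiW: "\<Phi> (\<lambda>a b. pp2 a * pp b) + \<Phi> (\<lambda>a b. nn2 a * nn b) < \<infinity>"
  proof -
    have "\<Phi> (\<lambda>a b. pp2 a * pp b) + \<Phi> (\<lambda>a b. nn2 a * nn b) = \<Phi> (\<lambda>a b. pp2 a * pp b + nn2 a * nn b)"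
      by (rule Phi_add[symmetric]) measurable
    also have "\<dots> \<le> \<Phi> (\<lambda>a b. h2 a * 1 + 1 * h2 b)"
      by (rule Phi_mono) (rule key2)
    also have "\<dots> = \<Phi> (\<lambda>a b. h2 a * 1) + \<Phi> (\<lambda>a b. 1 * h2 b)"
      by (rule Phi_add) measurable
    also have "\<dots> = (\<integral>\<^sup>+b. h2 b \<partial>s) + (\<integral>\<^sup>+b. h2 b \<partial>s)"
      using Phi_side[of h2] by simp
    also have "\<dots> < \<infinity>" using fin_h2 by simp
    finally show ?thesis .
  qed

  have pr1: "\<Phi> (\<lambda>a b. h2 a * 1) = \<Psi> (\<lambda>a b. h2 a * 1)" by (rule prod) measurable
  have pr2: "\<Phi> (\<lambda>a b. 1 * h2 b) = \<Psi> (\<lambda>a b. 1 * h2 b)" by (rule prod) measurable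
  have pr3: "\<Phi> (\<lambda>a b. pp2 a * nn b) = \<Psi> (\<lambda>a b. pp2 a * nn b)" by (rule prod) measurable
  have pr4: "\<Phi> (\<lambda>a b. nn2 a * pp b) = \<Psi> (\<lambda>a b. nn2 a * pp b)" by (rule prod) measurable
  have pr5: "\<Phi> (\<lambda>a b. pp2 a * pp b) = \<Psi> (\<lambda>a b. pp2 a * pp b)" by (rule prod) measurable
  have pr6: "\<Phi> (\<lambda>a b. nn2 a * nn b) = \<Psi> (\<lambda>a b. nn2 a * nn b)" by (rule prod) measurable
  have sumeq: "\<Phi> G + (\<Phi> (\<lambda>a b. pp2 a * pp b) + \<Phi> (\<lambda>a b. nn2 a * nn b))
      = \<Psi> G + (\<Phi> (\<lambda>a b. pp2 a * pp b) + \<Phi> (\<lambda>a b. nn2 a * nn b))"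
  proof -
    have "\<Phi> G + (\<Phi> (\<lambda>a b. pp2 a * pp b) + \<Phi> (\<lambda>a b. nn2 a * nn b))
        = \<Phi> (\<lambda>a b. G a b + pp2 a * pp b + nn2 a * nn b)"
      by (subst Phi_add, measurable, subst Phi_add, measurable, (simp add: add.assoc)?)
    also have "\<dots> = \<Phi> (\<lambda>a b. h2 a * 1 + 1 * h2 b + pp2 a * nn b + nn2 a * pp b)"
      by (simp only: key)
    also have "\<dots> = \<Phi> (\<lambda>a b. h2 a * 1) + \<Phi> (\<lambda>a b. 1 * h2 b) + \<Phi> (\<lambda>a b. pp2 a * nn b) + \<Phi> (\<lambda>a b. nn2 a * pp b)"
      by (subst Phi_add, measurable, subst Phi_add, measurable, subst Phi_add, measurable, simp?)
    also have "\<dots> = \<Psi> (\<lambda>a b. h2 a * 1) + \<Psi> (\<lambda>a b. 1 * h2 b) + \<Psi> (\<lambda>a b. pp2 a * nn b) + \<Psi> (\<lambda>a b. nn2 a * pp b)"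
      by (simp only: pr1 pr2 pr3 pr4 pr5 pr6)
    also have "\<dots> = \<Psi> (\<lambda>a b. h2 a * 1 + 1 * h2 b + pp2 a * nn b + nn2 a * pp b)"
      by (subst Psi_add, measurable, subst Psi_add, measurable, subst Psi_add, measurable, simp?)
    also have "\<dots> = \<Psi> (\<lambda>a b. G a b + pp2 a * pp b + nn2 a * nn b)"
      by (simp only: key)
    also have "\<dots> = \<Psi> G + (\<Psi> (\<lambda>a b. pp2 a * pp b) + \<Psi> (\<lambda>a b. nn2 a * nn b))"
      by (subst Psi_add, measurable, subst Psi_add, measurable, (simp add: add.assoc)?)
    also have "\<dots> = \<Psi> G + (\<Phi> (\<lambda>a b. pp2 a * pp b) + \<Phi> (\<lambda>a b. nn2 a * nn b))"
      by (simp only: pr1 pr2 pr3 pr4 pr5 pr6)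
    finally show ?thesis .
  qed
  have PhiPsi: "\<Phi> G = \<Psi> G"
    using sumeq PhiW by (simp add: add.commute[of "\<Phi> G"] add.commute[of "\<Psi> G"] ennreal_add_left_cancel) (metis less_irrefl)

  have D1: "dirichlet_form (\<lambda>b. Pt b \<bind> Qt) s ht = \<Phi> G / 2"
    unfolding dirichlet_form_def \<Phi>_def G_def ..
  have D2: "dirichlet_form (\<lambda>\<eta>. P \<eta> \<bind> Q) \<nu> (\<lambda>\<theta>. ht (t \<theta>)) = \<Psi> G / 2"
    unfolding dirichlet_form_def \<Psi>_def G_def ..

  have tS: "t \<in> \<nu> \<rightarrow>\<^sub>M S" using t_meas by (simp add: measurable_cong_sets[OF nu_sets refl])
  have htS: "(\<lambda>x. (ht x)\<^sup>2) \<in> borel_measurable S"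
    using ht_m by (simp add: measurable_cong_sets[OF sets_s refl])
  have "integrable \<nu> (\<lambda>\<theta>. (ht (t \<theta>))\<^sup>2)"
    using ht_L2 integrable_distr_eq[OF tS htS] unfolding in_L2_def s_def by simp
  moreover have "(\<lambda>\<theta>. ht (t \<theta>)) \<in> borel_measurable \<nu>" by measurable
  ultimately show ?thesis unfolding in_L2_def using D1 D2 PhiPsi by simp
qed
end
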